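(* Let $G$ be a strongly connected doubly stochasticable digraph of order $n\in\mathbb{Z}_{>0}$ with DS-character $\operatorname{ds}(G)$. Then for every integer $C\geq\operatorname{ds}(G)$ there exists a weight assignment $A_{\mathrm{wb}}\in\mathbb{Z}^{n\times n}_{\geq0}$ that makes $G$ a $C$-regular digraph.
   Context: A digraph $G=(V,E)$, $V=\{v_1,\dots,v_n\}$, $E\subseteq V\times V$ (self-loops allowed); strongly connected means a directed path exists between every ordered pair of distinct vertices. An adjacency matrix (weight assignment) for $G$ is $A\in\mathbb{R}^{n\times n}_{\geq0}$ with $a_{ij}>0$ iff $(v_i,v_j)\in E$; $G$ is doubly stochasticable if it admits one with all row and column sums $1$. $G$ with weights $A$ is $C$-regular if $G$ is strongly connected and all row sums and all column sums of $A$ equal $C$. A cycle is a directed path $v_{i_1},\dots,v_{i_k},v_{i_1}$ with distinct $v_{i_1},\dots,v_{i_k}$ (self-loops are cycles), viewed as a subdigraph; $\mathcal{C}(G)$ is the set of subdigraphs that are a single edgeless vertex, a cycle, or a union of pairwise vertex-disjoint cycles; a family generates $G$ if the union of vertex sets is $V$ and of edge sets is $E$. $\operatorname{ds}(G)$ is the minimum cardinality of a subset of $\mathcal{C}(G)$ generating $G$ all of whose elements contain every vertex of $G$. *)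

theory Defs
  imports Complex_Main
begin

definition digraph :: "nat \<Rightarrow> (nat \<times> nat) set \<Rightarrow> bool" where
  "digraph n E \<longleftrightarrow> E \<subseteq> {0..<n} \<times> {0..<n}"

definition strongly_connected :: "nat \<Rightarrow> (nat \<times> nat) set \<Rightarrow> bool" where
  "strongly_connected n E \<longleftrightarrow>
     (\<forall>i<n. \<forall>j<n. i \<noteq> j \<longrightarrow> (i, j) \<in> E\<^sup>+)"

definition is_adjacency :: "nat \<Rightarrow> (nat \<times> nat) set \<Rightarrow> (nat \<Rightarrow> nat \<Rightarrow> 'a::linordered_idom) \<Rightarrow> bool" where
  "is_adjacency n E A \<longleftrightarrow>
     (\<forall>i<n. \<forall>j<n. 0 \<le> A i j \<and> (0 < A i j \<longleftrightarrow> (i, j) \<in> E))"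

definition doubly_stochasticable :: "nat \<Rightarrow> (nat \<times> nat) set \<Rightarrow> bool" where
  "doubly_stochasticable n E \<longleftrightarrow>
     (\<exists>A :: nat \<Rightarrow> nat \<Rightarrow> real. is_adjacency n E A \<and>
        (\<forall>i<n. (\<Sum>j<n. A i j) = 1) \<and> (\<forall>j<n. (\<Sum>i<n. A i j) = 1))"

definition regular :: "nat \<Rightarrow> (nat \<times> nat) set \<Rightarrow> (nat \<Rightarrow> nat \<Rightarrow> 'a::linordered_idom) \<Rightarrow> 'a \<Rightarrow> bool" where
  "regular n E A C \<longleftrightarrow> strongly_connected n E \<and>
     (\<forall>i<n. (\<Sum>j<n. A i j) = C) \<and> (\<forall>j<n. (\<Sum>i<n. A i j) = C)"

text \<open>A cycle v_1,...,v_k,v_1 with distinct v_i, viewed as a subdigraph (self-loops are cycles).\<close>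
definition is_cycle :: "nat set \<times> (nat \<times> nat) set \<Rightarrow> bool" where
  "is_cycle H \<longleftrightarrow> (\<exists>vs. vs \<noteq> [] \<and> distinct vs \<and> fst H = set vs \<and>
      snd H = {(vs ! i, vs ! (Suc i mod length vs)) | i. i < length vs})"

definition subdigraph :: "nat \<Rightarrow> (nat \<times> nat) set \<Rightarrow> nat set \<times> (nat \<times> nat) set \<Rightarrow> bool" where
  "subdigraph n E H \<longleftrightarrow> fst H \<subseteq> {0..<n} \<and> snd H \<subseteq> E"

definition cycle_subgraphs :: "nat \<Rightarrow> (nat \<times> nat) set \<Rightarrow> (nat set \<times> (nat \<times> nat) set) set" where
  "cycle_subgraphs n E = {H. subdigraph n E H \<and>
     ((\<exists>v. H = ({v}, {})) \<or>
      (\<exists>F. finite F \<and> F \<noteq> {} \<and> (\<forall>c\<in>F. is_cycle c) \<and>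
          (\<forall>c\<in>F. \<forall>d\<in>F. c \<noteq> d \<longrightarrow> fst c \<inter> fst d = {}) \<and>
          H = (\<Union>(fst ` F), \<Union>(snd ` F))))}"

definition generates :: "nat \<Rightarrow> (nat \<times> nat) set \<Rightarrow> (nat set \<times> (nat \<times> nat) set) set \<Rightarrow> bool" where
  "generates n E S \<longleftrightarrow> \<Union>(fst ` S) = {0..<n} \<and> \<Union>(snd ` S) = E"

definition ds :: "nat \<Rightarrow> (nat \<times> nat) set \<Rightarrow> nat" where
  "ds n E = (LEAST k. \<exists>S. S \<subseteq> cycle_subgraphs n E \<and> finite S \<and> card S = k \<and>
      generates n E S \<and> (\<forall>H\<in>S. fst H = {0..<n}))"

end

theory Submission
  imports Defs "HOL-Combinatorics.Cycles"
begin


lemma hall: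
  assumes "finite I" "\<forall>i\<in>I. finite (A i)"
    and "\<forall>K\<subseteq>I. card K \<le> card (\<Union>(A ` K))"
  shows "\<exists>f. inj_on f I \<and> (\<forall>i\<in>I. f i \<in> A i)"
  using assms
proof (induction "card I" arbitrary: I A rule: less_induct)
  case less
  show ?case
  proof (cases "I = {}")
    case True then show ?thesis by auto
  next
    case False
    show ?thesis
    proof (cases "\<exists>K. K \<subseteq> I \<and> K \<noteq> {} \<and> K \<noteq> I \<and> card K = card (\<Union>(A ` K))")
      case True
      then obtain K where K: "K \<subseteq> I" "K \<noteq> {}" "K \<noteq> I" "card K = card (\<Union>(A ` K))" by blast
      have fK: "finite K" using K(1) less(2) finite_subset by blast
      have cK: "card K < card I" using K less(2) by (meson psubsetI psubset_card_mono)
      have "\<exists>f. inj_on f K \<and> (\<forall>i\<in>K. f i \<in> A i)"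
        using less(1)[OF cK fK, of A] less(3,4) K(1) by (meson order_trans subsetD)
      then obtain f1 where f1: "inj_on f1 K" "\<forall>i\<in>K. f1 i \<in> A i" by blast
      define B where "B i = A i - \<Union>(A ` K)" for i
      have fIK: "finite (I - K)" using less(2) by auto
      have cIK: "card (I - K) < card I" using K less(2)
        using fK card_Diff_subset[OF fK K(1)] card_gt_0_iff[of K] card_mono[OF less(2) K(1)] by linarith
      have fU: "finite (\<Union>(A ` L))" if "L \<subseteq> I" for L
        using that less(2,3) by (meson finite_UN_I finite_subset subsetD)
      have hallB: "\<forall>L\<subseteq>I - K. card L \<le> card (\<Union>(B ` L))"
      proof (intro allI impI)
        fix L assume L: "L \<subseteq> I - K"
        have eq: "\<Union>(B ` L) = \<Union>(A ` (L \<union> K)) - \<Union>(A ` K)" unfolding B_def by auto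
        have sub: "\<Union>(A ` K) \<subseteq> \<Union>(A ` (L \<union> K))" by auto
        have "card (\<Union>(B ` L)) = card (\<Union>(A ` (L \<union> K))) - card (\<Union>(A ` K))"
          unfolding eq using sub fU[of "L \<union> K"] L K(1) by (intro card_Diff_subset) (auto intro: finite_subset)
        moreover have "L \<union> K \<subseteq> I" using L K(1) by auto
        then have "card (L \<union> K) \<le> card (\<Union>(A ` (L \<union> K)))" using less(4) by blast
        moreover have "card (L \<union> K) = card L + card K"
          using L fK fIK by (subst card_Un_disjoint) (auto intro: finite_subset)
        ultimately show "card L \<le> card (\<Union>(B ` L))" using K(4) by linarith
      qed
      have "\<exists>f. inj_on f (I - K) \<and> (\<forall>i\<in>I - K. f i \<in> B i)"
        using less(1)[OF cIK fIK, of B] hallB less(3) unfolding B_def by auto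
      then obtain f2 where f2: "inj_on f2 (I - K)" "\<forall>i\<in>I - K. f2 i \<in> B i" by blast
      define f where "f i = (if i \<in> K then f1 i else f2 i)" for i
      have "inj_on f I"
      proof (rule inj_onI)
        fix x y assume xy: "x \<in> I" "y \<in> I" "f x = f y"
        show "x = y"
        proof (cases "x \<in> K"; cases "y \<in> K")
          assume "x \<in> K" "y \<in> K" then show ?thesis using xy f1 unfolding f_def by (auto dest: inj_onD)
        next
          assume "x \<notin> K" "y \<notin> K" then show ?thesis using xy f2 unfolding f_def by (auto dest: inj_onD)
        next
          assume a: "x \<in> K" "y \<notin> K"
          have "f x \<in> \<Union>(A ` K)" using a f1 unfolding f_def by auto
          moreover have "f y \<notin> \<Union>(A ` K)" using a f2 xy(2) unfolding f_def B_def by auto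
          ultimately show ?thesis using xy by simp
        next
          assume a: "x \<notin> K" "y \<in> K"
          have "f y \<in> \<Union>(A ` K)" using a f1 unfolding f_def by auto
          moreover have "f x \<notin> \<Union>(A ` K)" using a f2 xy(1) unfolding f_def B_def by auto
          ultimately show ?thesis using xy by simp
        qed
      qed
      moreover have "\<forall>i\<in>I. f i \<in> A i" using f1 f2 unfolding f_def B_def by auto
      ultimately show ?thesis by blast
    next
      case False2: False
      obtain i0 where i0: "i0 \<in> I" using False by blast
      have "card {i0} \<le> card (A i0)" proof -
        have "{i0} \<subseteq> I" using i0 by auto
        then have "card {i0} \<le> card (\<Union>(A ` {i0}))" using less(4) by blast
        then show ?thesis by simp
      qed
      then have "A i0 \<noteq> {}" by auto
      then obtain x where x: "x \<in> A i0" by blast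
      define B where "B i = A i - {x}" for i
      have fI: "finite (I - {i0})" using less(2) by auto
      have cI: "card (I - {i0}) < card I" by (rule card_Diff1_less[OF less(2) i0])
      have hallB: "\<forall>L\<subseteq>I - {i0}. card L \<le> card (\<Union>(B ` L))"
      proof (intro allI impI)
        fix L assume L: "L \<subseteq> I - {i0}"
        show "card L \<le> card (\<Union>(B ` L))"
        proof (cases "L = {}")
          case True then show ?thesis by simp
        next
          case False
          have "L \<noteq> I" using L i0 by auto
          then have "card L \<noteq> card (\<Union>(A ` L))" using False2 L False by blast
          moreover have "card L \<le> card (\<Union>(A ` L))" using less(4) L by auto
          moreover have "\<Union>(B ` L) = \<Union>(A ` L) - {x}" unfolding B_def by auto
          moreover have "card (\<Union>(A ` L) - {x}) \<ge> card (\<Union>(A ` L)) - 1"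
            by (metis One_nat_def card_Diff_singleton_if diff_le_self order_refl)
          moreover have "finite (\<Union>(A ` L))" using L less(2,3)
            by (meson Diff_subset finite_UN_I finite_subset subsetD)
          ultimately show ?thesis by simp
        qed
      qed
      have "\<exists>f. inj_on f (I - {i0}) \<and> (\<forall>i\<in>I - {i0}. f i \<in> B i)"
        using less(1)[OF cI fI, of B] hallB less(3) unfolding B_def by auto
      then obtain f2 where f2: "inj_on f2 (I - {i0})" "\<forall>i\<in>I - {i0}. f2 i \<in> B i" by blast
      define f where "f i = (if i = i0 then x else f2 i)" for i
      have "inj_on f I"
        using f2 unfolding f_def B_def inj_on_def by auto
      moreover have "\<forall>i\<in>I. f i \<in> A i" using f2 x unfolding f_def B_def by auto
      ultimately show ?thesis by blast
    qed
  qed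
qed



lemma perm_edge:
  fixes a :: "nat \<Rightarrow> nat \<Rightarrow> real"
  assumes dg: "digraph n E" and adj: "is_adjacency n E a"
    and rows: "\<forall>i<n. (\<Sum>j<n. a i j) = 1" and cols: "\<forall>j<n. (\<Sum>i<n. a i j) = 1"
    and ij: "(i, j) \<in> E"
  shows "\<exists>\<sigma>. \<sigma> permutes {0..<n} \<and> \<sigma> i = j \<and> (\<forall>k<n. (k, \<sigma> k) \<in> E)"
proof -
  have i: "i < n" and j: "j < n" using dg ij unfolding digraph_def by auto
  have aij: "a i j > 0" using adj i j ij unfolding is_adjacency_def by auto
  define I where "I = {0..<n} - {i}"
  define B where "B k = {l. l < n \<and> l \<noteq> j \<and> (k, l) \<in> E}" for k
  have hallc: "\<forall>K\<subseteq>I. card K \<le> card (\<Union>(B ` K))"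
  proof (intro allI impI)
    fix K assume K: "K \<subseteq> I"
    define N where "N = \<Union>(B ` K)"
    have fK: "finite K" using K unfolding I_def by (auto intro: finite_subset)
    have Nsub: "N \<subseteq> {..<n}" "j \<notin> N" unfolding N_def B_def by auto
    have fN: "finite N" using Nsub(1) finite_subset by blast
    have Ksub: "K \<subseteq> {..<n}" "i \<notin> K" using K unfolding I_def by auto
    have row: "(\<Sum>l<n. a k l) = (\<Sum>l\<in>insert j N. a k l)" if k: "k \<in> K" for k
    proof (rule sum.mono_neutral_right)
      show "finite {..<n}" by simp
      show "insert j N \<subseteq> {..<n}" using Nsub j by auto
      show "\<forall>l\<in>{..<n} - insert j N. a k l = 0"
      proof
        fix l assume l: "l \<in> {..<n} - insert j N"
        have kn: "k < n" using k Ksub by auto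
        show "a k l = 0"
        proof (rule ccontr)
          assume "a k l \<noteq> 0"
          then have "a k l > 0" using adj kn l unfolding is_adjacency_def
            by (metis DiffD1 lessThan_iff order_le_less)
          then have "(k, l) \<in> E" using adj kn l unfolding is_adjacency_def by auto
          then have "l \<in> N" using l k unfolding N_def B_def by auto
          then show False using l by auto
        qed
      qed
    qed
    have "real (card K) = (\<Sum>k\<in>K. (\<Sum>l<n. a k l))"
      using rows Ksub by (simp add: subset_iff)
    also have "\<dots> = (\<Sum>k\<in>K. (\<Sum>l\<in>N. a k l) + a k j)"
      using row Nsub fN by (simp add: sum.insert add.commute)
    also have "\<dots> = (\<Sum>l\<in>N. \<Sum>k\<in>K. a k l) + (\<Sum>k\<in>K. a k j)"
      by (simp add: sum.distrib sum.swap[of _ K N])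
    also have "(\<Sum>l\<in>N. \<Sum>k\<in>K. a k l) \<le> (\<Sum>l\<in>N. \<Sum>k<n. a k l)"
    proof (rule sum_mono)
      fix l assume l: "l \<in> N"
      then have ln: "l < n" using Nsub by auto
      show "(\<Sum>k\<in>K. a k l) \<le> (\<Sum>k<n. a k l)"
        by (rule sum_mono2) (use Ksub adj ln in \<open>auto simp: is_adjacency_def\<close>)
    qed
    also have "(\<Sum>l\<in>N. \<Sum>k<n. a k l) = real (card N)"
      using cols Nsub by (simp add: subset_iff)
    also have "(\<Sum>k\<in>K. a k j) \<le> (\<Sum>k\<in>{..<n} - {i}. a k j)"
      by (rule sum_mono2) (use Ksub adj j in \<open>auto simp: is_adjacency_def\<close>)
    also have "(\<Sum>k\<in>{..<n} - {i}. a k j) = 1 - a i j"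
      using cols j i by (simp add: sum_diff1)
    finally have "real (card K) < real (card N) + 1" using aij by linarith
    then show "card K \<le> card (\<Union>(B ` K))" unfolding N_def by linarith
  qed
  have "\<exists>f. inj_on f I \<and> (\<forall>k\<in>I. f k \<in> B k)"
    by (rule hall) (use hallc in \<open>auto simp: I_def B_def\<close>)
  then obtain f where f: "inj_on f I" "\<forall>k\<in>I. f k \<in> B k" by blast
  define \<sigma> where "\<sigma> x = (if x = i then j else if x < n then f x else x)" for x
  have img: "\<sigma> ` {0..<n} \<subseteq> {0..<n}" using f j unfolding \<sigma>_def I_def B_def by auto
  have inj: "inj_on \<sigma> {0..<n}"
  proof (rule inj_onI)
    fix x y assume xy: "x \<in> {0..<n}" "y \<in> {0..<n}" "\<sigma> x = \<sigma> y"
    show "x = y"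
    proof (cases "x = i"; cases "y = i")
      assume "x \<noteq> i" "y \<noteq> i" then show ?thesis
        using xy f(1) unfolding \<sigma>_def I_def by (auto dest: inj_onD)
    next
      assume "x = i" "y \<noteq> i" then show ?thesis
        using xy f(2) unfolding \<sigma>_def I_def B_def by auto
    next
      assume "x \<noteq> i" "y = i" then show ?thesis
        using xy f(2) unfolding \<sigma>_def I_def B_def by auto
    qed simp
  qed
  have "\<sigma> permutes {0..<n}"
  proof (rule bij_imp_permutes)
    show "bij_betw \<sigma> {0..<n} {0..<n}"
      unfolding bij_betw_def using inj img endo_inj_surj[OF _ img inj] by simp
    show "\<And>x. x \<notin> {0..<n} \<Longrightarrow> \<sigma> x = x" using i unfolding \<sigma>_def by auto
  qed
  moreover have "\<sigma> i = j" unfolding \<sigma>_def by simp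
  moreover have "\<forall>k<n. (k, \<sigma> k) \<in> E" using f ij unfolding \<sigma>_def I_def B_def by auto
  ultimately show ?thesis by blast
qed



lemma funpow_mod_lp:
  assumes "permutation p"
  shows "(p ^^ (q mod least_power p a)) a = (p ^^ q) a"
proof -
  have "(p ^^ q) a = (p ^^ (q mod (least_power p a))) ((p ^^ (q - (q mod (least_power p a)))) a)"
    by (metis add_diff_inverse_nat funpow_add mod_less_eq_dividend not_le o_apply)
  also have " ... = (p ^^ (q mod (least_power p a))) a"
    using least_power_dvd[OF assms] by (metis dvd_minus_mod)
  finally show ?thesis by simp
qed

definition cyc :: "(nat \<Rightarrow> nat) \<Rightarrow> nat \<Rightarrow> nat set \<times> (nat \<times> nat) set" where
  "cyc p a = (set (support p a), {(x, p x) | x. x \<in> set (support p a)})"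

lemma cyc_is_cycle:
  assumes p: "permutation p"
  shows "is_cycle (cyc p a)"
  unfolding is_cycle_def
proof (intro exI conjI)
  let ?vs = "support p a"
  let ?m = "least_power p a"
  have m: "?m > 0" using least_power_of_permutation(2)[OF p] .
  show "?vs \<noteq> []" using m by simp
  show "distinct ?vs" using cycle_of_permutation[OF p] .
  show "fst (cyc p a) = set ?vs" unfolding cyc_def by simp
  have nth: "?vs ! k = (p ^^ k) a" if "k < ?m" for k using that by simp
  have nth2: "?vs ! (Suc k mod ?m) = p ((p ^^ k) a)" for k
    using funpow_mod_lp[OF p, of "Suc k" a] m by simp
  show "snd (cyc p a) = {(?vs ! i, ?vs ! (Suc i mod length ?vs)) | i. i < length ?vs}"
  proof
    show "snd (cyc p a) \<subseteq> {(?vs ! i, ?vs ! (Suc i mod length ?vs)) | i. i < length ?vs}"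
    proof
      fix e assume "e \<in> snd (cyc p a)"
      then obtain x where e: "e = (x, p x)" "x \<in> set ?vs" unfolding cyc_def by auto
      then obtain k where k: "k < ?m" "x = (p ^^ k) a" by auto
      show "e \<in> {(?vs ! i, ?vs ! (Suc i mod length ?vs)) | i. i < length ?vs}"
        using e k nth nth2 by (intro CollectI exI[of _ k]) simp
    qed
  next
    show "{(?vs ! i, ?vs ! (Suc i mod length ?vs)) | i. i < length ?vs} \<subseteq> snd (cyc p a)"
    proof
      fix e assume "e \<in> {(?vs ! i, ?vs ! (Suc i mod length ?vs)) | i. i < length ?vs}"
      then obtain k where k: "k < ?m" "e = (?vs ! k, ?vs ! (Suc k mod ?m))" by auto
      then have "e = ((p ^^ k) a, p ((p ^^ k) a))" using nth nth2 by simp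
      moreover have "(p ^^ k) a \<in> set ?vs" using k by auto
      ultimately show "e \<in> snd (cyc p a)" unfolding cyc_def by auto
    qed
  qed
qed

lemma perm_cycle_sub:
  assumes n: "n > 0" and p: "\<sigma> permutes {0..<n}" and E: "\<forall>k<n. (k, \<sigma> k) \<in> E"
  shows "({0..<n}, {(k, \<sigma> k) | k. k < n}) \<in> cycle_subgraphs n E"
proof -
  have pp: "permutation \<sigma>" using p permutation_permutes by blast
  define F where "F = cyc \<sigma> ` {0..<n}"
  have sup: "set (support \<sigma> a) \<subseteq> {0..<n}" if "a < n" for a
  proof
    fix x assume "x \<in> set (support \<sigma> a)"
    then obtain k where "x = (\<sigma> ^^ k) a" by auto
    then show "x \<in> {0..<n}" using permutes_in_image[OF permutes_funpow[OF p, of k]] that by auto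
  qed
  have self: "a \<in> set (support \<sigma> a)" for a
    using support_set[OF pp, of a] by (metis funpow_0 rangeI)
  have U1: "\<Union>(fst ` F) = {0..<n}"
    unfolding F_def cyc_def using sup self by fastforce
  have U2: "\<Union>(snd ` F) = {(k, \<sigma> k) | k. k < n}"
    unfolding F_def cyc_def using sup self by fastforce
  have disj: "\<forall>c\<in>F. \<forall>d\<in>F. c \<noteq> d \<longrightarrow> fst c \<inter> fst d = {}"
  proof (intro ballI impI)
    fix c d assume cd: "c \<in> F" "d \<in> F" "c \<noteq> d"
    then obtain a b where ab: "c = cyc \<sigma> a" "d = cyc \<sigma> b" unfolding F_def by auto
    have "set (support \<sigma> a) \<noteq> set (support \<sigma> b)" using cd ab unfolding cyc_def by auto
    then show "fst c \<inter> fst d = {}" using disjoint_support[OF pp] ab unfolding cyc_def disjoint_def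
      by auto
  qed
  have sd: "subdigraph n E ({0..<n}, {(k, \<sigma> k) | k. k < n})"
    unfolding subdigraph_def using E by auto
  have fin: "finite F" "F \<noteq> {}" "\<forall>c\<in>F. is_cycle c" using n cyc_is_cycle[OF pp] unfolding F_def by auto
  have eq: "({0..<n}, {(k, \<sigma> k) | k. k < n}) = (\<Union>(fst ` F), \<Union>(snd ` F))"
    using U1 U2 by simp
  have ex: "\<exists>F. finite F \<and> F \<noteq> {} \<and> (\<forall>c\<in>F. is_cycle c) \<and>
          (\<forall>c\<in>F. \<forall>d\<in>F. c \<noteq> d \<longrightarrow> fst c \<inter> fst d = {}) \<and>
          ({0..<n}, {(k, \<sigma> k) | k. k < n}) = (\<Union>(fst ` F), \<Union>(snd ` F))"
    apply (rule exI[of _ F])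
    using fin disj eq by (intro conjI)
  show ?thesis
    unfolding cycle_subgraphs_def
    apply (rule CollectI)
    apply (rule conjI)
     apply (rule sd)
    apply (rule disjI2)
    apply (rule ex)
    done
qed



lemma suc_mod_inj:
  fixes m k k' :: nat
  assumes "k < m" "k' < m" "Suc k mod m = Suc k' mod m"
  shows "k = k'"
proof (cases "Suc k = m"; cases "Suc k' = m")
  assume "Suc k \<noteq> m" "Suc k' \<noteq> m"
  then show ?thesis using assms by simp
next
  assume "Suc k = m" "Suc k' \<noteq> m"
  then show ?thesis using assms by simp
next
  assume "Suc k \<noteq> m" "Suc k' = m"
  then show ?thesis using assms by simp
qed simp

lemma cycle_facts:
  assumes "is_cycle c"
  shows "\<And>x y. (x, y) \<in> snd c \<Longrightarrow> x \<in> fst c \<and> y \<in> fst c"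
    and "\<And>x. x \<in> fst c \<Longrightarrow> \<exists>!y. (x, y) \<in> snd c"
    and "\<And>y. y \<in> fst c \<Longrightarrow> \<exists>!x. (x, y) \<in> snd c"
    and "snd c \<noteq> {}"
proof -
  obtain vs where vs: "vs \<noteq> []" "distinct vs" "fst c = set vs"
    "snd c = {(vs ! i, vs ! (Suc i mod length vs)) | i. i < length vs}"
    using assms unfolding is_cycle_def by blast
  let ?m = "length vs"
  have m: "?m > 0" using vs by simp
  show "\<And>x y. (x, y) \<in> snd c \<Longrightarrow> x \<in> fst c \<and> y \<in> fst c" using vs m by auto
  show "snd c \<noteq> {}" using vs m by auto
  show "\<exists>!y. (x, y) \<in> snd c" if x: "x \<in> fst c" for x
  proof -
    obtain k where k: "k < ?m" "x = vs ! k" using x vs by (auto simp: in_set_conv_nth)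
    show ?thesis
    proof (rule ex1I[of _ "vs ! (Suc k mod ?m)"])
      show "(x, vs ! (Suc k mod ?m)) \<in> snd c" using vs k by auto
      fix y assume "(x, y) \<in> snd c"
      then obtain k' where k': "k' < ?m" "x = vs ! k'" "y = vs ! (Suc k' mod ?m)" using vs by auto
      have "k = k'" using k k' vs(2) nth_eq_iff_index_eq by metis
      then show "y = vs ! (Suc k mod ?m)" using k' by simp
    qed
  qed
  show "\<exists>!x. (x, y) \<in> snd c" if y: "y \<in> fst c" for y
  proof -
    obtain k where k: "k < ?m" "y = vs ! k" using y vs by (auto simp: in_set_conv_nth)
    define p where "p = (if k = 0 then ?m - 1 else k - 1)"
    have p: "p < ?m" "Suc p mod ?m = k" unfolding p_def using k m by auto
    show ?thesis
    proof (rule ex1I[of _ "vs ! p"])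
      show "(vs ! p, y) \<in> snd c" using vs k p by (auto intro!: exI[of _ p])
      fix x assume "(x, y) \<in> snd c"
      then obtain k' where k': "k' < ?m" "x = vs ! k'" "y = vs ! (Suc k' mod ?m)" using vs by auto
      have "Suc k' mod ?m < ?m" using m by simp
      then have "Suc k' mod ?m = k" using k k' vs(2) nth_eq_iff_index_eq by metis
      then have "Suc k' mod ?m = Suc p mod ?m" using p by simp
      then have "k' = p" using k'(1) p(1) suc_mod_inj by blast
      then show "x = vs ! p" using k' by simp
    qed
  qed
qed



lemma ex1_obt: assumes "\<exists>!y. Q y" obtains y where "Q y" "\<And>y'. Q y' \<Longrightarrow> y' = y"
  using assms by metis

lemma union_deg:
  assumes H: "H \<in> cycle_subgraphs n E" and ne: "snd H \<noteq> {}"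
  shows "\<And>x. x \<in> fst H \<Longrightarrow> \<exists>!y. (x, y) \<in> snd H"
    and "\<And>y. y \<in> fst H \<Longrightarrow> \<exists>!x. (x, y) \<in> snd H"
proof -
  have dj: "(\<exists>v. H = ({v}, {})) \<or>
      (\<exists>F. finite F \<and> F \<noteq> {} \<and> (\<forall>c\<in>F. is_cycle c) \<and>
          (\<forall>c\<in>F. \<forall>d\<in>F. c \<noteq> d \<longrightarrow> fst c \<inter> fst d = {}) \<and>
          H = (\<Union>(fst ` F), \<Union>(snd ` F)))"
    using H unfolding cycle_subgraphs_def mem_Collect_eq by (rule conjunct2)
  have nv: "\<not> (\<exists>v. H = ({v}, {}))" using ne by auto
  have ex: "\<exists>F. finite F \<and> F \<noteq> {} \<and> (\<forall>c\<in>F. is_cycle c) \<and>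
          (\<forall>c\<in>F. \<forall>d\<in>F. c \<noteq> d \<longrightarrow> fst c \<inter> fst d = {}) \<and>
          H = (\<Union>(fst ` F), \<Union>(snd ` F))"
    using dj
  proof
    assume "\<exists>v. H = ({v}, {})" with nv show ?thesis by contradiction
  qed
  then obtain F where F0: "finite F \<and> F \<noteq> {} \<and> (\<forall>c\<in>F. is_cycle c) \<and>
          (\<forall>c\<in>F. \<forall>d\<in>F. c \<noteq> d \<longrightarrow> fst c \<inter> fst d = {}) \<and>
          H = (\<Union>(fst ` F), \<Union>(snd ` F))" by (rule exE)
  have F: "\<forall>c\<in>F. is_cycle c" "\<forall>c\<in>F. \<forall>d\<in>F. c \<noteq> d \<longrightarrow> fst c \<inter> fst d = {}"
    "H = (\<Union>(fst ` F), \<Union>(snd ` F))" using F0 by simp_all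
  have inF: "\<And>c x y. c \<in> F \<Longrightarrow> (x, y) \<in> snd c \<Longrightarrow> x \<in> fst c \<and> y \<in> fst c"
  proof -
    fix c x y assume a: "c \<in> F" "(x, y) \<in> snd c"
    show "x \<in> fst c \<and> y \<in> fst c" using cycle_facts(1)[OF F(1)[rule_format, OF a(1)] a(2)] .
  qed
  show "\<exists>!y. (x, y) \<in> snd H" if x: "x \<in> fst H" for x
  proof -
    obtain c where c: "c \<in> F" "x \<in> fst c" using x F(3) by auto
    obtain y where y: "(x, y) \<in> snd c" "\<forall>y'. (x, y') \<in> snd c \<longrightarrow> y' = y"
      using cycle_facts(2)[OF F(1)[rule_format, OF c(1)] c(2)] by (rule ex1E)
    show ?thesis
    proof (rule ex1I[of _ y])
      show "(x, y) \<in> snd H" using y(1) c(1) F(3) by auto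
      fix y' assume "(x, y') \<in> snd H"
      then obtain d where d: "d \<in> F" "(x, y') \<in> snd d" using F(3) by auto
      then have dd: "x \<in> fst d" using inF[OF d] by simp
      have "d = c"
      proof (rule ccontr)
        assume "d \<noteq> c"
        then have "fst d \<inter> fst c = {}" using F(2) d(1) c(1) by simp
        then show False using dd c(2) by auto
      qed
      then show "y' = y" using y(2) d(2) by blast
    qed
  qed
  show "\<exists>!x. (x, y) \<in> snd H" if x: "y \<in> fst H" for y
  proof -
    obtain c where c: "c \<in> F" "y \<in> fst c" using x F(3) by auto
    obtain x where y: "(x, y) \<in> snd c" "\<forall>x'. (x', y) \<in> snd c \<longrightarrow> x' = x"
      using cycle_facts(3)[OF F(1)[rule_format, OF c(1)] c(2)] by (rule ex1E)
    show ?thesis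
    proof (rule ex1I[of _ x])
      show "(x, y) \<in> snd H" using y(1) c(1) F(3) by auto
      fix x' assume "(x', y) \<in> snd H"
      then obtain d where d: "d \<in> F" "(x', y) \<in> snd d" using F(3) by auto
      then have dd: "y \<in> fst d" using inF[OF d] by simp
      have "d = c"
      proof (rule ccontr)
        assume "d \<noteq> c"
        then have "fst d \<inter> fst c = {}" using F(2) d(1) c(1) by simp
        then show False using dd c(2) by auto
      qed
      then show "x' = x" using y(2) d(2) by blast
    qed
  qed
qed

definition ind :: "nat set \<times> (nat \<times> nat) set \<Rightarrow> nat \<Rightarrow> nat \<Rightarrow> int" where
  "ind H i j = (if (i, j) \<in> snd H then 1 else 0)"

lemma ind_sums:
  assumes H: "H \<in> cycle_subgraphs n E" and ne: "snd H \<noteq> {}" and full: "fst H = {0..<n}"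
    and dg: "digraph n E" and i: "i < n"
  shows "(\<Sum>j<n. ind H i j) = 1" and "(\<Sum>j<n. ind H j i) = 1"
proof -
  have "subdigraph n E H" using H unfolding cycle_subgraphs_def mem_Collect_eq by (rule conjunct1)
  then have sub: "snd H \<subseteq> {0..<n} \<times> {0..<n}" using dg unfolding subdigraph_def digraph_def
    by blast
  have iH: "i \<in> fst H" using full i by simp
  obtain y where y: "(i, y) \<in> snd H" "\<forall>y'. (i, y') \<in> snd H \<longrightarrow> y' = y"
    using union_deg(1)[OF H ne iH] by (rule ex1E)
  have yn: "y < n" using y(1) sub by auto
  have yy: "(i, j) \<in> snd H \<longleftrightarrow> j = y" for j using y by blast
  have "(\<Sum>j<n. ind H i j) = (\<Sum>j<n. if j = y then 1 else 0)"
    by (rule sum.cong) (simp_all add: ind_def yy)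
  then show "(\<Sum>j<n. ind H i j) = 1" using yn by simp
  have iH: "i \<in> fst H" using full i by simp
  obtain x where x: "(x, i) \<in> snd H" "\<forall>x'. (x', i) \<in> snd H \<longrightarrow> x' = x"
    using union_deg(2)[OF H ne iH] by (rule ex1E)
  have xn: "x < n" using x(1) sub by auto
  have xx: "(j, i) \<in> snd H \<longleftrightarrow> j = x" for j using x by blast
  have "(\<Sum>j<n. ind H j i) = (\<Sum>j<n. if j = x then 1 else 0)"
    by (rule sum.cong) (simp_all add: ind_def xx)
  then show "(\<Sum>j<n. ind H j i) = 1" using xn by simp
qed



theorem proposition3p13:
  fixes n :: nat and E :: "(nat \<times> nat) set" and C :: int
  assumes "n > 0"
    and "digraph n E"
    and "strongly_connected n E"
    and "doubly_stochasticable n E"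
    and "C \<ge> int (ds n E)"
  shows "\<exists>A :: nat \<Rightarrow> nat \<Rightarrow> int. is_adjacency n E A \<and> regular n E A C"
proof -
  from assms(4) obtain a :: "nat \<Rightarrow> nat \<Rightarrow> real" where
    a: "is_adjacency n E a" "\<forall>i<n. (\<Sum>j<n. a i j) = 1" "\<forall>j<n. (\<Sum>i<n. a i j) = 1"
    unfolding doubly_stochasticable_def by blast
  have Esub: "E \<subseteq> {0..<n} \<times> {0..<n}" using assms(2) unfolding digraph_def .
  have finE: "finite E" using Esub finite_subset by blast
  have "(\<Sum>j<n. a 0 j) = 1" using a(2) assms(1) by simp
  then obtain j0 where j0: "j0 \<in> {..<n}" "a 0 j0 \<noteq> 0"
    by (metis sum.neutral zero_neq_one)
  then have "a 0 j0 > 0" using a(1) assms(1) unfolding is_adjacency_def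
    by (metis lessThan_iff order_le_less)
  then have E0: "(0, j0) \<in> E" using a(1) assms(1) j0(1) unfolding is_adjacency_def by auto
  define sg where "sg e = (SOME \<sigma>. \<sigma> permutes {0..<n} \<and> \<sigma> (fst e) = snd e \<and> (\<forall>k<n. (k, \<sigma> k) \<in> E))" for e
  have sg: "sg e permutes {0..<n} \<and> sg e (fst e) = snd e \<and> (\<forall>k<n. (k, sg e k) \<in> E)" if e: "e \<in> E" for e
  proof -
    have "\<exists>\<sigma>. \<sigma> permutes {0..<n} \<and> \<sigma> (fst e) = snd e \<and> (\<forall>k<n. (k, \<sigma> k) \<in> E)"
      using perm_edge[OF assms(2) a(1) a(2) a(3), of "fst e" "snd e"] e by simp
    then show ?thesis unfolding sg_def by (rule someI_ex)
  qed
  define gr where "gr \<sigma> = ({0..<n}, {(k, \<sigma> k) | k. k < n})" for \<sigma> :: "nat \<Rightarrow> nat"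
  define S1 where "S1 = (\<lambda>e. gr (sg e)) ` E"
  have S1a: "S1 \<subseteq> cycle_subgraphs n E"
  proof
    fix H assume "H \<in> S1"
    then obtain e where e: "e \<in> E" "H = gr (sg e)" unfolding S1_def by blast
    show "H \<in> cycle_subgraphs n E" unfolding e(2) gr_def
      using perm_cycle_sub[OF assms(1)] sg[OF e(1)] by blast
  qed
  have S1b: "finite S1" unfolding S1_def using finE by simp
  have S1c: "\<forall>H\<in>S1. fst H = {0..<n}" unfolding S1_def gr_def by simp
  have S1d: "\<Union>(fst ` S1) = {0..<n}" using S1c E0 unfolding S1_def by auto
  have S1e: "\<Union>(snd ` S1) = E"
  proof
    show "\<Union>(snd ` S1) \<subseteq> E" unfolding S1_def gr_def using sg by auto
    show "E \<subseteq> \<Union>(snd ` S1)"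
    proof
      fix e assume e: "e \<in> E"
      obtain i j where ij: "e = (i, j)" by (cases e)
      have "i < n" using e ij Esub by auto
      moreover have "sg e i = j" using sg[OF e] ij by simp
      ultimately have "e \<in> snd (gr (sg e))" unfolding gr_def using ij by auto
      then show "e \<in> \<Union>(snd ` S1)" unfolding S1_def using e by blast
    qed
  qed
  have "\<exists>k S. S \<subseteq> cycle_subgraphs n E \<and> finite S \<and> card S = k \<and>
      generates n E S \<and> (\<forall>H\<in>S. fst H = {0..<n})"
    using S1a S1b S1c S1d S1e unfolding generates_def by blast
  then have "\<exists>S. S \<subseteq> cycle_subgraphs n E \<and> finite S \<and> card S = ds n E \<and>
      generates n E S \<and> (\<forall>H\<in>S. fst H = {0..<n})"
    unfolding ds_def by (rule LeastI_ex)
  then obtain S where S: "S \<subseteq> cycle_subgraphs n E" "finite S" "card S = ds n E"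
    "\<Union>(snd ` S) = E" "\<forall>H\<in>S. fst H = {0..<n}"
    unfolding generates_def by blast
  define S' where "S' = {H\<in>S. snd H \<noteq> {}}"
  define m where "m = card S'"
  have finS': "finite S'" using S(2) unfolding S'_def by simp
  have mC: "int m \<le> C" unfolding m_def using card_mono[OF S(2), of S'] S(3) assms(5)
    unfolding S'_def by auto
  obtain H0 where H0: "H0 \<in> S'"
  proof -
    obtain H where "H \<in> S" "(0, j0) \<in> snd H" using E0 S(4) by blast
    then show ?thesis using that unfolding S'_def by blast
  qed
  have S'p: "H \<in> cycle_subgraphs n E" "snd H \<noteq> {}" "fst H = {0..<n}" "snd H \<subseteq> E"
    if "H \<in> S'" for H using that S unfolding S'_def by auto
  define A where "A i j = (\<Sum>H\<in>S'. ind H i j) + (C - int m) * ind H0 i j" for i j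
  have rowsum: "(\<Sum>j<n. A i j) = C" if i: "i < n" for i
  proof -
    have "(\<Sum>j<n. A i j) = (\<Sum>H\<in>S'. \<Sum>j<n. ind H i j) + (C - int m) * (\<Sum>j<n. ind H0 i j)"
      unfolding A_def by (simp add: sum.distrib sum_distrib_left sum.swap[of _ S'])
    also have "(\<Sum>H\<in>S'. \<Sum>j<n. ind H i j) = (\<Sum>H\<in>S'. 1)"
      using ind_sums(1)[OF S'p(1) S'p(2) S'p(3) assms(2) i] by simp
    also have "(\<Sum>j<n. ind H0 i j) = 1"
      using ind_sums(1)[OF S'p(1)[OF H0] S'p(2)[OF H0] S'p(3)[OF H0] assms(2) i] .
    finally show ?thesis unfolding m_def by simp
  qed
  have colsum: "(\<Sum>i<n. A i j) = C" if j: "j < n" for j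
  proof -
    have "(\<Sum>i<n. A i j) = (\<Sum>H\<in>S'. \<Sum>i<n. ind H i j) + (C - int m) * (\<Sum>i<n. ind H0 i j)"
      unfolding A_def by (simp add: sum.distrib sum_distrib_left sum.swap[of _ S'])
    also have "(\<Sum>H\<in>S'. \<Sum>i<n. ind H i j) = (\<Sum>H\<in>S'. 1)"
      using ind_sums(2)[OF S'p(1) S'p(2) S'p(3) assms(2) j] by simp
    also have "(\<Sum>i<n. ind H0 i j) = 1"
      using ind_sums(2)[OF S'p(1)[OF H0] S'p(2)[OF H0] S'p(3)[OF H0] assms(2) j] .
    finally show ?thesis unfolding m_def by simp
  qed
  have indnn: "ind H i j \<ge> 0" for H i j unfolding ind_def by simp
  have adj: "is_adjacency n E A"
    unfolding is_adjacency_def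
  proof (intro allI impI conjI)
    fix i j assume ij: "i < n" "j < n"
    have s0: "(\<Sum>H\<in>S'. ind H i j) \<ge> 0" by (rule sum_nonneg) (simp add: indnn)
    have t0: "(C - int m) * ind H0 i j \<ge> 0" using mC indnn by simp
    show "0 \<le> A i j" unfolding A_def using s0 t0 by simp
    show "0 < A i j \<longleftrightarrow> (i, j) \<in> E"
    proof
      assume "0 < A i j"
      then have "(\<Sum>H\<in>S'. ind H i j) \<noteq> 0 \<or> ind H0 i j \<noteq> 0" unfolding A_def by auto
      then show "(i, j) \<in> E"
      proof
        assume "(\<Sum>H\<in>S'. ind H i j) \<noteq> 0"
        then obtain H where H: "H \<in> S'" "ind H i j \<noteq> 0" by (meson sum.neutral)
        then have "(i, j) \<in> snd H" unfolding ind_def by (auto split: if_splits)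
        then show ?thesis using S'p(4)[OF H(1)] by blast
      next
        assume "ind H0 i j \<noteq> 0"
        then show ?thesis using S'p(4)[OF H0] unfolding ind_def by (auto split: if_splits)
      qed
    next
      assume e: "(i, j) \<in> E"
      then obtain H where H: "H \<in> S" "(i, j) \<in> snd H" using S(4) by blast
      then have HS': "H \<in> S'" unfolding S'_def by auto
      have "ind H i j \<le> (\<Sum>H\<in>S'. ind H i j)"
        by (rule member_le_sum[OF HS']) (simp_all add: indnn finS')
      moreover have "ind H i j = 1" using H(2) unfolding ind_def by simp
      ultimately show "0 < A i j" unfolding A_def using t0 by simp
    qed
  qed
  have "regular n E A C" unfolding regular_def using assms(3) rowsum colsum by blast
  with adj show ?thesis by blast
qed


end
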